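(* Let $n\ge3$, $\alpha=(\alpha_2,\dots,\alpha_{n-1})$ positive integers, $N>|\alpha|$, $L=N-|\alpha|$, and $2\le\ell\le n$. There exists a bijection $\phi:W^>\to W^{\le}$ such that: (1) $\phi$ maps $W_k^>$ bijectively onto $W_{k+1}^{\le}$ for each $0\le k\le L-1$; (2) $\mathrm{quinv}'(\phi(w))=\mathrm{quinv}'(w)$ for all $w\in W^>$; (3) the subword of $w$ consisting of the letters $2,\dots,n-1$ equals the corresponding subword of $\phi(w)$.
   Context: $|\alpha|=\sum_i\alpha_i$. For $0\le k\le L$, $W_k$ is the set of words $w=(w_1,\dots,w_N)$ over $\{1,\dots,n\}$ containing exactly $k$ letters $n$, exactly $L-k$ letters $1$, and exactly $\alpha_i$ letters $i$ for $2\le i\le n-1$. $\mathrm{coinv}(w)=\#\{(i,j):i<j,\ w_i<w_j\}$ and $\mathrm{quinv}'(w)=\mathrm{coinv}(w)+\binom{\alpha_\ell}{2}+\cdots+\binom{\alpha_{n-1}}{2}+\binom{k}{2}$ for $w\in W_k$ (the middle sum is empty if $\ell=n$). For $w\in W_k$ let $p_n(w)$ be the position, from the left, of the leftmost $n$ in $w$, and $p_1(w)$ the position, counted from the right, of the rightmost $1$ in the word obtained from $w$ by deleting all $n$'s. $W_k^{\le}$ (resp. $W_k^>$) is the set of $w\in W_k$ with $p_n(w)\le p_1(w)$ (resp. $p_n(w)>p_1(w)$), with the conventions $W_0=W_0^>$ and $W_L=W_L^{\le}$. $W^{\le}=\bigcup_kW_k^{\le}$ and $W^>=\bigcup_kW_k^>$.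 *)

theory Defs
  imports Main
begin

(* Words are lists of natural numbers; letters range over {1..n}.
   alpha :: nat => nat gives alpha_i for 2 <= i <= n-1 (other values irrelevant). *)

definition absalpha :: "nat \<Rightarrow> (nat \<Rightarrow> nat) \<Rightarrow> nat" where
  "absalpha n \<alpha> = (\<Sum>i=2..n-1. \<alpha> i)"

definition Lval :: "nat \<Rightarrow> (nat \<Rightarrow> nat) \<Rightarrow> nat \<Rightarrow> nat" where
  "Lval n \<alpha> N = N - absalpha n \<alpha>"

definition Wk :: "nat \<Rightarrow> (nat \<Rightarrow> nat) \<Rightarrow> nat \<Rightarrow> nat \<Rightarrow> nat list set" where
  "Wk n \<alpha> N k = {w. length w = N \<and> set w \<subseteq> {1..n}
      \<and> count_list w n = k \<and> count_list w 1 = Lval n \<alpha> N - k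
      \<and> (\<forall>i\<in>{2..n-1}. count_list w i = \<alpha> i)}"

definition coinv :: "nat list \<Rightarrow> nat" where
  "coinv w = card {(i, j). i < j \<and> j < length w \<and> w ! i < w ! j}"

definition quinv' :: "nat \<Rightarrow> (nat \<Rightarrow> nat) \<Rightarrow> nat \<Rightarrow> nat list \<Rightarrow> nat" where
  "quinv' n \<alpha> l w = coinv w + (\<Sum>i=l..n-1. \<alpha> i choose 2) + (count_list w n choose 2)"

definition pn :: "nat \<Rightarrow> nat list \<Rightarrow> nat" where
  "pn n w = Suc (LEAST i. i < length w \<and> w ! i = n)"

definition p1 :: "nat \<Rightarrow> nat list \<Rightarrow> nat" where
  "p1 n w = (let v = rev (filter (\<lambda>x. x \<noteq> n) w) in Suc (LEAST i. i < length v \<and> v ! i = 1))"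

definition Wk_le :: "nat \<Rightarrow> (nat \<Rightarrow> nat) \<Rightarrow> nat \<Rightarrow> nat \<Rightarrow> nat list set" where
  "Wk_le n \<alpha> N k =
     (if k = Lval n \<alpha> N then Wk n \<alpha> N k
      else if k = 0 then {}
      else {w \<in> Wk n \<alpha> N k. pn n w \<le> p1 n w})"

definition Wk_gt :: "nat \<Rightarrow> (nat \<Rightarrow> nat) \<Rightarrow> nat \<Rightarrow> nat \<Rightarrow> nat list set" where
  "Wk_gt n \<alpha> N k =
     (if k = 0 then Wk n \<alpha> N k
      else if k = Lval n \<alpha> N then {}
      else {w \<in> Wk n \<alpha> N k. pn n w > p1 n w})"

definition W_le :: "nat \<Rightarrow> (nat \<Rightarrow> nat) \<Rightarrow> nat \<Rightarrow> nat list set" where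
  "W_le n \<alpha> N = (\<Union>k\<in>{0..Lval n \<alpha> N}. Wk_le n \<alpha> N k)"

definition W_gt :: "nat \<Rightarrow> (nat \<Rightarrow> nat) \<Rightarrow> nat \<Rightarrow> nat list set" where
  "W_gt n \<alpha> N = (\<Union>k\<in>{0..Lval n \<alpha> N}. Wk_gt n \<alpha> N k)"

end

theory Submission
  imports Defs "HOL-Library.Multiset"
begin


fun gaps :: "nat \<Rightarrow> nat list \<Rightarrow> nat list" where
  "gaps n [] = []"
| "gaps n (x#xs) = (if x = n then 0 # gaps n xs else map Suc (gaps n xs))"

fun dec :: "nat \<Rightarrow> nat list \<Rightarrow> nat list \<Rightarrow> nat list" where
  "dec n [] G = replicate (length G) n"
| "dec n (x#xs) G = replicate (count_list G 0) n @ x # dec n xs (map (\<lambda>g. g - 1) (filter (\<lambda>g. g \<noteq> 0) G))"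

lemma dec_mset: "mset G = mset H \<Longrightarrow> dec n xs G = dec n xs H"
proof (induction xs arbitrary: G H)
  case Nil
  then show ?case by (metis dec.simps(1) size_mset)
next
  case (Cons x xs)
  have "count_list G 0 = count_list H 0" using Cons.prems by (metis count_mset)
  moreover have "mset (map (\<lambda>g. g - 1) (filter (\<lambda>g. g \<noteq> 0) G)) = mset (map (\<lambda>g. g - 1) (filter (\<lambda>g. g \<noteq> 0) H))"
    using Cons.prems by (simp add: mset_filter)
  ultimately show ?case using Cons.IH by simp
qed

lemma dec_cons0: "dec n xs (0 # G) = n # dec n xs G"
  by (cases xs) auto

lemma enc_dec: "dec n (filter (\<lambda>x. x \<noteq> n) w) (gaps n w) = w"
proof (induction w)
  case Nil then show ?case by simp
next
  case (Cons x w)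
  show ?case
  proof (cases "x = n")
    case True then show ?thesis using Cons by (simp add: dec_cons0)
  next
    case False
    have "map (\<lambda>g. g - 1) (filter (\<lambda>g. g \<noteq> 0) (map Suc (gaps n w))) = gaps n w"
      by (simp add: filter_map o_def)
    moreover have "count_list (map Suc (gaps n w)) 0 = 0" by (simp add: count_list_0_iff)
    ultimately show ?thesis using Cons False by simp
  qed
qed

lemma filter_dec: "n \<notin> set xs \<Longrightarrow> \<forall>g\<in>set G. g \<le> length xs \<Longrightarrow> filter (\<lambda>x. x \<noteq> n) (dec n xs G) = xs"
proof (induction xs arbitrary: G)
  case Nil then show ?case by simp
next
  case (Cons x xs)
  have "\<forall>g\<in>set (map (\<lambda>g. g - 1) (filter (\<lambda>g. g \<noteq> 0) G)). g \<le> length xs" using Cons.prems by auto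
  then show ?case using Cons by simp
qed

lemma gaps_append_rep: "gaps n (replicate c n @ ys) = replicate c 0 @ gaps n ys"
  by (induction c) auto

lemma gaps_dec: "n \<notin> set xs \<Longrightarrow> \<forall>g\<in>set G. g \<le> length xs \<Longrightarrow> mset (gaps n (dec n xs G)) = mset G"
proof (induction xs arbitrary: G)
  case Nil
  then have "G = replicate (length G) 0" by (simp add: replicate_length_same)
  then show ?case using gaps_append_rep[of n "length G" "[]"] by (metis append.right_neutral dec.simps(1) gaps.simps(1))
next
  case (Cons x xs)
  let ?G = "map (\<lambda>g. g - 1) (filter (\<lambda>g. g \<noteq> 0) G)"
  have b: "\<forall>g\<in>set ?G. g \<le> length xs" using Cons.prems by auto
  have "mset (gaps n (dec n (x#xs) G)) = replicate_mset (count_list G 0) 0 + image_mset Suc (mset (gaps n (dec n xs ?G)))"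
    using Cons.prems by (simp add: gaps_append_rep)
  also have "\<dots> = replicate_mset (count_list G 0) 0 + image_mset Suc (mset ?G)"
    using Cons.IH b Cons.prems by simp
  also have "image_mset Suc (mset ?G) = filter_mset (\<lambda>g. g \<noteq> 0) (mset G)"
    by (induction G) auto
  also have "replicate_mset (count_list G 0) 0 = filter_mset (\<lambda>g. g = 0) (mset G)"
    by (simp add: filter_eq_replicate_mset count_mset)
  finally show ?case by (metis multiset_partition add.commute)
qed

lemma length_gaps: "length (gaps n w) = count_list w n"
  by (induction w) auto

lemma gaps_bound: "\<forall>g\<in>set (gaps n w). g \<le> length (filter (\<lambda>x. x \<noteq> n) w)"
  by (induction w) auto

lemma count_dec: "n \<notin> set xs \<Longrightarrow> \<forall>g\<in>set G. g \<le> length xs \<Longrightarrow> count_list (dec n xs G) n = length G"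
  by (metis gaps_dec length_gaps size_mset)



lemma coinv_Nil: "coinv [] = 0" by (simp add: coinv_def)

lemma coinv_Cons: "coinv (x#xs) = length (filter (\<lambda>y. x < y) xs) + coinv xs"
proof -
  let ?S = "{(i, j). i < j \<and> j < length xs \<and> xs ! i < xs ! j}"
  let ?A = "(\<lambda>j. (0::nat, Suc j)) ` {j. j < length xs \<and> x < xs ! j}"
  let ?B = "(\<lambda>(i,j). (Suc i, Suc j)) ` ?S"
  have eq: "{(i, j). i < j \<and> j < length (x#xs) \<and> (x#xs) ! i < (x#xs) ! j} = ?A \<union> ?B"
  proof (rule set_eqI, clarify)
    fix i j
    show "((i, j) \<in> {(i, j). i < j \<and> j < length (x#xs) \<and> (x#xs) ! i < (x#xs) ! j}) = ((i, j) \<in> ?A \<union> ?B)"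
      by (cases i; cases j) (auto simp: image_iff)
  qed
  have fin: "finite ?S" by (rule finite_subset[of _ "{..<length xs} \<times> {..<length xs}"]) auto
  have dis: "?A \<inter> ?B = {}" by auto
  have cA: "card ?A = length (filter (\<lambda>y. x < y) xs)"
    by (subst card_image) (auto simp: inj_on_def length_filter_conv_card)
  have cB: "card ?B = card ?S"
    by (rule card_image) (auto simp: inj_on_def)
  have "card (?A \<union> ?B) = card ?A + card ?B"
    by (rule card_Un_disjoint) (use fin in auto)
  then show ?thesis unfolding coinv_def using eq cA cB by simp
qed

lemma len_filter_split: "x < n \<Longrightarrow> length (filter (\<lambda>y. x < y) xs) = length (filter (\<lambda>y. x < y) (filter (\<lambda>y. y \<noteq> n) xs)) + count_list xs n"
  by (induction xs) auto

lemma sum_list_Suc: "sum_list (map Suc G) = sum_list G + length G"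
  by (induction G) auto

lemma coinv_enc: "\<forall>x\<in>set w. x \<le> n \<Longrightarrow> coinv w = coinv (filter (\<lambda>x. x \<noteq> n) w) + sum_list (gaps n w)"
proof (induction w)
  case Nil then show ?case by (simp add: coinv_Nil)
next
  case (Cons x w)
  show ?case
  proof (cases "x = n")
    case True
    have "filter (\<lambda>y. n < y) w = []" using Cons.prems by (auto simp: filter_empty_conv)
    then show ?thesis using Cons True by (simp add: coinv_Cons)
  next
    case False
    then have "x < n" using Cons.prems by auto
    then show ?thesis using Cons False by (simp add: coinv_Cons len_filter_split sum_list_Suc length_gaps)
  qed
qed

lemma tw_less: "a \<in> set w \<Longrightarrow> length (takeWhile (\<lambda>x. x \<noteq> a) w) < length w"
  by (induction w) auto

lemma least_tw: "a \<in> set w \<Longrightarrow> (LEAST i. i < length w \<and> w ! i = a) = length (takeWhile (\<lambda>x. x \<noteq> a) w)"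
proof (rule Least_equality)
  assume "a \<in> set w"
  then show "length (takeWhile (\<lambda>x. x \<noteq> a) w) < length w \<and> w ! length (takeWhile (\<lambda>x. x \<noteq> a) w) = a"
    using tw_less[of a w] nth_length_takeWhile[of "\<lambda>x. x \<noteq> a" w] by auto
next
  fix y assume "y < length w \<and> w ! y = a"
  then show "length (takeWhile (\<lambda>x. x \<noteq> a) w) \<le> y"
    by (metis (mono_tags, lifting) leI nth_mem set_takeWhileD takeWhile_nth)
qed

lemma gaps_min: "n \<in> set w \<Longrightarrow> Min (set (gaps n w)) = length (takeWhile (\<lambda>x. x \<noteq> n) w)"
proof (induction w)
  case Nil then show ?case by simp
next
  case (Cons x w)
  show ?case
  proof (cases "x = n")
    case True then show ?thesis by (simp add: Min_insert2)
  next
    case False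
    then have ne: "gaps n w \<noteq> []" using Cons.prems by (metis length_0_conv length_gaps count_list_0_iff set_ConsD)
    have "Min (Suc ` set (gaps n w)) = Suc (Min (set (gaps n w)))"
      using ne by (simp add: mono_Min_commute[symmetric] mono_def)
    then show ?thesis using Cons False by simp
  qed
qed

lemma pn_gaps: "n \<in> set w \<Longrightarrow> pn n w = Suc (Min (set (gaps n w)))"
  by (simp add: pn_def least_tw gaps_min)

lemma p1_tw: "1 \<in> set (filter (\<lambda>x. x \<noteq> n) w) \<Longrightarrow> p1 n w = Suc (length (takeWhile (\<lambda>x. x \<noteq> 1) (rev (filter (\<lambda>x. x \<noteq> n) w))))"
  unfolding p1_def Let_def by (subst least_tw) auto



definition phi :: "nat \<Rightarrow> nat list \<Rightarrow> nat list" where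
  "phi n w = (let v = rev (filter (\<lambda>x. x \<noteq> n) w); t = takeWhile (\<lambda>x. x \<noteq> 1) v;
     rest = tl (dropWhile (\<lambda>x. x \<noteq> 1) v)
   in dec n (rev (t @ rest)) (length t # map (\<lambda>g. g - 1) (gaps n w)))"

definition psi :: "nat \<Rightarrow> nat list \<Rightarrow> nat list" where
  "psi n w = (let v = rev (filter (\<lambda>x. x \<noteq> n) w); G = gaps n w; h = Min (set G)
   in dec n (rev (take h v @ 1 # drop h v)) (map Suc (remove1 h G)))"

lemma set_dec: "set (dec n xs G) \<subseteq> insert n (set xs)"
  by (induction n xs G rule: dec.induct) auto

lemma len_enc: "length w = length (filter (\<lambda>x. x \<noteq> n) w) + count_list w n"
  by (induction w) auto

lemma count_F: "i \<noteq> n \<Longrightarrow> count_list (filter (\<lambda>x. x \<noteq> n) w) i = count_list w i"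
  by (induction w) auto

lemma wk_iff: "n \<ge> 3 \<Longrightarrow> w \<in> Wk n \<alpha> N k \<longleftrightarrow>
   (length (filter (\<lambda>x. x \<noteq> n) w) + k = N \<and> set (filter (\<lambda>x. x \<noteq> n) w) \<subseteq> {1..<n}
    \<and> count_list w n = k \<and> count_list (filter (\<lambda>x. x \<noteq> n) w) 1 = Lval n \<alpha> N - k
    \<and> (\<forall>i\<in>{2..n-1}. count_list (filter (\<lambda>x. x \<noteq> n) w) i = \<alpha> i))" (is "_ \<Longrightarrow> ?l \<longleftrightarrow> ?r")
proof -
  assume n: "n \<ge> 3"
  have c1: "count_list (filter (\<lambda>x. x \<noteq> n) w) 1 = count_list w 1" using n count_F[of 1 n w] by simp
  have ci: "\<forall>i\<in>{2..n-1}. count_list (filter (\<lambda>x. x \<noteq> n) w) i = count_list w i"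
  proof
    fix i assume "i \<in> {2..n-1}" then have "i \<noteq> n" using n by auto
    then show "count_list (filter (\<lambda>x. x \<noteq> n) w) i = count_list w i" by (rule count_F)
  qed
  have s: "set w \<subseteq> {1..n} \<longleftrightarrow> set (filter (\<lambda>x. x \<noteq> n) w) \<subseteq> {1..<n}"
    using n by (auto simp: subset_iff)
  show ?thesis unfolding Wk_def using len_enc[of w n] c1 ci s by auto
qed



lemma coinv_del1: "\<forall>x\<in>set A. 1 \<le> x \<Longrightarrow> \<forall>x\<in>set B. 1 < x \<Longrightarrow> coinv (A @ 1 # B) = coinv (A @ B) + length B"
proof (induction A)
  case Nil
  have "filter (\<lambda>y. 1 < y) B = B" using Nil by (simp add: filter_id_conv)
  then show ?case by (simp add: coinv_Cons)
next
  case (Cons a A)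
  have "\<not> a < 1" using Cons.prems by auto
  then show ?case using Cons by (simp add: coinv_Cons)
qed

lemma cnt_pos: "count_list xs a > 0 \<Longrightarrow> a \<in> set xs"
  by (metis count_notin less_irrefl)

lemma filter_F: "\<not> P n \<Longrightarrow> filter P (filter (\<lambda>x. x \<noteq> n) w) = filter P w"
  by (induction w) auto

lemma split1: "(1::nat) \<in> set v \<Longrightarrow> v = takeWhile (\<lambda>x. x \<noteq> 1) v @ 1 # tl (dropWhile (\<lambda>x. x \<noteq> 1) v)"
proof -
  assume a: "(1::nat) \<in> set v"
  then have ne: "dropWhile (\<lambda>x. x \<noteq> 1) v \<noteq> []" by auto
  then have "hd (dropWhile (\<lambda>x. x \<noteq> 1) v) = 1" using hd_dropWhile by blast
  then have "dropWhile (\<lambda>x. x \<noteq> 1) v = 1 # tl (dropWhile (\<lambda>x. x \<noteq> 1) v)" using ne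
    by (metis list.collapse)
  then show ?thesis by (metis takeWhile_dropWhile_id)
qed

lemma phi_props:
  assumes n: "n \<ge> 3" and kL: "k < Lval n \<alpha> N" and w: "w \<in> Wk_gt n \<alpha> N k"
  shows "phi n w \<in> Wk_le n \<alpha> N (Suc k) \<and> psi n (phi n w) = w \<and> coinv (phi n w) + k = coinv w
     \<and> count_list (phi n w) n = Suc k
     \<and> filter (\<lambda>x. 2 \<le> x \<and> x \<le> n - 1) (phi n w) = filter (\<lambda>x. 2 \<le> x \<and> x \<le> n - 1) w"
proof -
  define xs where "xs = filter (\<lambda>x. x \<noteq> n) w"
  define v where "v = rev xs"
  define t where "t = takeWhile (\<lambda>x. x \<noteq> 1) v"
  define rest where "rest = tl (dropWhile (\<lambda>x. x \<noteq> 1) v)"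
  define ys where "ys = rev (t @ rest)"
  define G where "G = gaps n w"
  define G' where "G' = length t # map (\<lambda>g. g - 1) G"
  have phiw: "phi n w = dec n ys G'"
    unfolding phi_def ys_def G'_def t_def rest_def v_def xs_def G_def Let_def by simp
  have wk: "w \<in> Wk n \<alpha> N k" using w kL unfolding Wk_gt_def by (auto split: if_splits)
  note W = wk[unfolded wk_iff[OF n], folded xs_def]
  have c1: "count_list xs 1 > 0" using W kL by simp
  then have "1 \<in> set v" unfolding v_def by (simp add: cnt_pos)
  then have vsplit: "v = t @ 1 # rest" unfolding t_def rest_def by (rule split1)
  have xsv: "xs = rev rest @ 1 # rev t" using vsplit unfolding v_def by (metis rev_append rev_rev_ident rev.simps(2) append_assoc append_Cons append_Nil)
  have setxs: "set xs \<subseteq> {1..<n}" using W by simp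
  have t1: "\<forall>x\<in>set t. x \<noteq> 1" unfolding t_def by (auto dest: set_takeWhileD)
  have tn: "\<forall>x\<in>set t. 1 < x \<and> x < n" using t1 setxs xsv by force
  have rn: "\<forall>x\<in>set rest. 1 \<le> x \<and> x < n" using setxs xsv by force
  have nys: "n \<notin> set ys" unfolding ys_def using tn rn by auto
  have lenys: "length xs = Suc (length ys)" unfolding ys_def using xsv by simp
  have lenG: "length G = k" unfolding G_def using W by (simp add: length_gaps)
  have Gb: "\<forall>g\<in>set G. g \<le> length xs" unfolding G_def xs_def by (rule gaps_bound)
  have G'b: "\<forall>g\<in>set G'. g \<le> length ys" unfolding G'_def using Gb lenys by (auto simp: ys_def)
  have Fphi: "filter (\<lambda>x. x \<noteq> n) (phi n w) = ys" using phiw filter_dec[OF nys G'b] by simp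
  have cphi: "count_list (phi n w) n = Suc k" using phiw count_dec[OF nys G'b] lenG by (simp add: G'_def)
  have gphi: "mset (gaps n (phi n w)) = mset G'" using phiw gaps_dec[OF nys G'b] by simp
  have Gt: "\<forall>g\<in>set G. length t < g"
  proof (cases "k = 0")
    case True then show ?thesis using lenG by simp
  next
    case False
    then have gt: "pn n w > p1 n w" using w kL unfolding Wk_gt_def by auto
    have "n \<in> set w" using W False by (intro cnt_pos) simp
    then have "pn n w = Suc (Min (set G))" unfolding G_def by (rule pn_gaps)
    moreover have "p1 n w = Suc (length t)" unfolding t_def v_def xs_def
      by (rule p1_tw) (use \<open>1 \<in> set v\<close> in \<open>simp add: v_def xs_def\<close>)
    ultimately have "length t < Min (set G)" using gt by simp
    then show ?thesis using Min_le[of "set G"] by (meson List.finite_set less_le_trans)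
  qed
  have minG': "Min (set G') = length t" unfolding G'_def using Gt by (auto intro!: Min_eqI)
  have minphi: "Min (set (gaps n (phi n w))) = length t"
    using minG' gphi by (metis set_mset_mset)
  have psiphi: "psi n (phi n w) = w"
  proof -
    have rv: "rev ys = t @ rest" unfolding ys_def by simp
    have "psi n (phi n w) = dec n (rev (t @ 1 # rest)) (map Suc (remove1 (length t) (gaps n (phi n w))))"
      unfolding psi_def Let_def Fphi minphi rv by simp
    also have "rev (t @ 1 # rest) = xs" using xsv by simp
    also have "dec n xs (map Suc (remove1 (length t) (gaps n (phi n w)))) = dec n xs G"
    proof (rule dec_mset)
      have "mset (map Suc (remove1 (length t) (gaps n (phi n w)))) = image_mset Suc (mset (map (\<lambda>g. g - 1) G))"
        using gphi by (simp add: G'_def)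
      also have "\<dots> = mset G" using Gt by (induction G) auto
      finally show "mset (map Suc (remove1 (length t) (gaps n (phi n w)))) = mset G" .
    qed
    finally show ?thesis unfolding xs_def G_def by (simp add: enc_dec)
  qed
  have letters: "\<forall>x\<in>set (phi n w). x \<le> n"
    using set_dec[of n ys G'] phiw nys tn rn unfolding ys_def by fastforce
  have lw: "\<forall>x\<in>set w. x \<le> n" using wk unfolding Wk_def by auto
  have cys: "coinv xs = coinv ys + length t"
    unfolding xsv ys_def using tn rn coinv_del1[of "rev rest" "rev t"] by simp
  have sG: "sum_list (map (\<lambda>g. g - 1) G) + k = sum_list G"
    using Gt lenG by (induction G arbitrary: k) auto
  have cv: "coinv (phi n w) + k = coinv w"
  proof -
    have "coinv (phi n w) = coinv ys + sum_list G'"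
      using coinv_enc[OF letters] Fphi gphi by (metis sum_mset_sum_list)
    moreover have "coinv w = coinv xs + sum_list G" using coinv_enc[OF lw] unfolding xs_def G_def .
    ultimately show ?thesis using cys sG by (simp add: G'_def)
  qed
  have filt: "filter (\<lambda>x. 2 \<le> x \<and> x \<le> n - 1) (phi n w) = filter (\<lambda>x. 2 \<le> x \<and> x \<le> n - 1) w"
  proof -
    have "filter (\<lambda>x. 2 \<le> x \<and> x \<le> n - 1) (phi n w) = filter (\<lambda>x. 2 \<le> x \<and> x \<le> n - 1) ys"
      using filter_F[of "\<lambda>x. 2 \<le> x \<and> x \<le> n - 1" n "phi n w"] n Fphi by simp
    also have "\<dots> = filter (\<lambda>x. 2 \<le> x \<and> x \<le> n - 1) xs" unfolding ys_def xsv by simp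
    also have "\<dots> = filter (\<lambda>x. 2 \<le> x \<and> x \<le> n - 1) w"
      using filter_F[of "\<lambda>x. 2 \<le> x \<and> x \<le> n - 1" n w] n unfolding xs_def by simp
    finally show ?thesis .
  qed
  have wk': "phi n w \<in> Wk n \<alpha> N (Suc k)"
    unfolding wk_iff[OF n] Fphi
  proof (intro conjI)
    show "length ys + Suc k = N" using W lenys by simp
    show "set ys \<subseteq> {1..<n}" unfolding ys_def using tn rn by auto
    show "count_list (phi n w) n = Suc k" by (rule cphi)
    show "count_list ys 1 = Lval n \<alpha> N - Suc k" using W t1 unfolding ys_def xsv by simp linarith
    show "\<forall>i\<in>{2..n - 1}. count_list ys i = \<alpha> i" using W unfolding ys_def xsv by auto
  qed
  have le: "phi n w \<in> Wk_le n \<alpha> N (Suc k)"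
  proof (cases "Suc k = Lval n \<alpha> N")
    case True then show ?thesis using wk' unfolding Wk_le_def by simp
  next
    case False
    have "n \<in> set (phi n w)" using cphi by (intro cnt_pos) simp
    then have pn: "pn n (phi n w) = Suc (length t)" using pn_gaps minphi by simp
    have "count_list ys 1 > 0" using W t1 False kL unfolding ys_def xsv by simp linarith
    then have "1 \<in> set ys" by (rule cnt_pos)
    then have "p1 n (phi n w) = Suc (length (takeWhile (\<lambda>x. x \<noteq> 1) (rev ys)))"
      using p1_tw[of n "phi n w"] Fphi by simp
    also have "takeWhile (\<lambda>x. x \<noteq> 1) (rev ys) = t @ takeWhile (\<lambda>x. x \<noteq> 1) rest"
      unfolding ys_def using t1 by simp
    finally have "pn n (phi n w) \<le> p1 n (phi n w)" using pn by simp
    then show ?thesis using wk' False unfolding Wk_le_def by simp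
  qed
  show ?thesis using le psiphi cv cphi filt by blast
qed



lemma psi_props:
  assumes n: "n \<ge> 3" and kL: "k < Lval n \<alpha> N" and w: "w \<in> Wk_le n \<alpha> N (Suc k)"
  shows "psi n w \<in> Wk_gt n \<alpha> N k \<and> phi n (psi n w) = w"
proof -
  define xs where "xs = filter (\<lambda>x. x \<noteq> n) w"
  define v where "v = rev xs"
  define G where "G = gaps n w"
  define h where "h = Min (set G)"
  define A where "A = take h v"
  define B where "B = drop h v"
  define xs2 where "xs2 = rev (A @ 1 # B)"
  define G2 where "G2 = map Suc (remove1 h G)"
  have psiw: "psi n w = dec n xs2 G2"
    unfolding psi_def xs2_def G2_def A_def B_def h_def v_def xs_def G_def Let_def by simp
  have wk: "w \<in> Wk n \<alpha> N (Suc k)" using w kL unfolding Wk_le_def by (auto split: if_splits)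
  note W = wk[unfolded wk_iff[OF n], folded xs_def]
  have lenG: "length G = Suc k" unfolding G_def using W by (simp add: length_gaps)
  have Gne: "G \<noteq> []" using lenG by auto
  have hG: "h \<in> set G" unfolding h_def using Gne by simp
  have hmin: "\<forall>g\<in>set G. h \<le> g" unfolding h_def by simp
  have Gb: "\<forall>g\<in>set G. g \<le> length xs" unfolding G_def xs_def by (rule gaps_bound)
  have hle: "h \<le> length v" using Gb hG v_def by simp
  have lenA: "length A = h" unfolding A_def using hle by simp
  have AB: "A @ B = v" unfolding A_def B_def by simp
  have setxs: "set xs \<subseteq> {1..<n}" using W by simp
  have nA: "\<forall>x\<in>set A. x \<noteq> 1"
  proof (cases "Suc k = Lval n \<alpha> N")
    case True
    then have "1 \<notin> set xs" using W by (simp add: count_list_0_iff)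
    then show ?thesis unfolding A_def v_def using in_set_takeD by fastforce
  next
    case False
    then have le: "pn n w \<le> p1 n w" using w unfolding Wk_le_def by simp
    have "n \<in> set w" using W by (intro cnt_pos) simp
    then have "pn n w = Suc h" unfolding h_def G_def by (rule pn_gaps)
    moreover have "1 \<in> set xs" using W False kL by (intro cnt_pos) simp
    then have "p1 n w = Suc (length (takeWhile (\<lambda>x. x \<noteq> 1) v))" unfolding v_def xs_def
      by (intro p1_tw) (simp add: xs_def)
    ultimately have hm: "h \<le> length (takeWhile (\<lambda>x. x \<noteq> 1) v)" using le by simp
    have "A = take h (takeWhile (\<lambda>x. x \<noteq> 1) v)" unfolding A_def using hm
      by (metis min.absorb1 take_take takeWhile_eq_take)
    then show ?thesis by (auto dest: in_set_takeD set_takeWhileD)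
  qed
  have setv: "set v \<subseteq> {1..<n}" using setxs v_def by simp
  have setxs2: "set xs2 \<subseteq> {1..<n}" unfolding xs2_def using setv AB n by auto
  have nxs2: "n \<notin> set xs2" using setxs2 by auto
  have lenxs2: "length xs2 = Suc (length xs)" unfolding xs2_def using AB v_def
    by (metis length_append length_rev list.size(4) add_Suc_right add_0_right)
  have G2b: "\<forall>g\<in>set G2. g \<le> length xs2" unfolding G2_def lenxs2 using Gb set_remove1_subset by fastforce
  have Fpsi: "filter (\<lambda>x. x \<noteq> n) (psi n w) = xs2" using psiw filter_dec[OF nxs2 G2b] by simp
  have cpsi: "count_list (psi n w) n = k" using psiw count_dec[OF nxs2 G2b] lenG hG
    by (simp add: G2_def length_remove1)
  have gpsi: "mset (gaps n (psi n w)) = mset G2" using psiw gaps_dec[OF nxs2 G2b] by simp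
  have wk': "psi n w \<in> Wk n \<alpha> N k"
    unfolding wk_iff[OF n] Fpsi
  proof (intro conjI)
    show "length xs2 + k = N" using W lenxs2 by simp
    show "set xs2 \<subseteq> {1..<n}" by (rule setxs2)
    show "count_list (psi n w) n = k" by (rule cpsi)
    have cv: "\<And>i. count_list v i = count_list A i + count_list B i" using AB by (metis count_list_append)
    have "count_list xs2 1 = Suc (count_list v 1)" unfolding xs2_def cv by simp
    then show "count_list xs2 1 = Lval n \<alpha> N - k" using W kL v_def by simp
    have "\<forall>i\<in>{2..n - 1}. count_list xs2 i = count_list v i" unfolding xs2_def cv by auto
    then show "\<forall>i\<in>{2..n - 1}. count_list xs2 i = \<alpha> i" using W v_def by simp
  qed
  have rxs2: "rev xs2 = A @ 1 # B" unfolding xs2_def by simp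
  have one2: "1 \<in> set xs2" unfolding xs2_def by simp
  have twA: "takeWhile (\<lambda>x. x \<noteq> 1) (A @ 1 # B) = A" using nA by simp
  have dwA: "dropWhile (\<lambda>x. x \<noteq> 1) (A @ 1 # B) = 1 # B" using nA by simp
  have gt: "psi n w \<in> Wk_gt n \<alpha> N k"
  proof (cases "k = 0")
    case True then show ?thesis using wk' unfolding Wk_gt_def by simp
  next
    case False
    have "n \<in> set (psi n w)" using cpsi False by (intro cnt_pos) simp
    then have pn: "pn n (psi n w) = Suc (Min (set G2))" using pn_gaps gpsi by (metis set_mset_mset)
    have G2ne: "G2 \<noteq> []" using lenG False hG using length_remove1[of h G] by (simp add: G2_def) (metis length_0_conv diff_Suc_1 gr_implies_not0)
    have "\<forall>g\<in>set G2. Suc h \<le> g" unfolding G2_def using hmin set_remove1_subset by fastforce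
    then have "Suc h \<le> Min (set G2)" using G2ne by simp
    moreover have "p1 n (psi n w) = Suc h"
      using p1_tw[of n "psi n w"] Fpsi rxs2 twA lenA one2 by simp
    ultimately have "pn n (psi n w) > p1 n (psi n w)" using pn by simp
    then show ?thesis using wk' False kL unfolding Wk_gt_def by simp
  qed
  have "phi n (psi n w) = dec n (rev (A @ B)) (length A # map (\<lambda>g. g - 1) (gaps n (psi n w)))"
    unfolding phi_def Let_def Fpsi rxs2 twA dwA by simp
  also have "rev (A @ B) = xs" using AB v_def by simp
  also have "dec n xs (length A # map (\<lambda>g. g - 1) (gaps n (psi n w))) = dec n xs G"
  proof (rule dec_mset)
    have "mset (length A # map (\<lambda>g. g - 1) (gaps n (psi n w))) = add_mset h (image_mset (\<lambda>g. g - 1) (mset G2))"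
      using gpsi lenA by simp
    also have "image_mset (\<lambda>g. g - 1) (mset G2) = mset G - {#h#}" unfolding G2_def by (simp add: multiset.map_comp o_def)
    also have "add_mset h (mset G - {#h#}) = mset G" using hG by simp
    finally show "mset (length A # map (\<lambda>g. g - 1) (gaps n (psi n w))) = mset G" .
  qed
  also have "dec n xs G = w" unfolding xs_def G_def by (rule enc_dec)
  finally show ?thesis using gt by simp
qed



theorem mainTheorem16:
  fixes n N l :: nat and \<alpha> :: "nat \<Rightarrow> nat"
  assumes "n \<ge> 3"
    and "\<forall>i\<in>{2..n-1}. \<alpha> i > 0"
    and "N > absalpha n \<alpha>"
    and "2 \<le> l" and "l \<le> n"
  shows "\<exists>\<phi>. bij_betw \<phi> (W_gt n \<alpha> N) (W_le n \<alpha> N)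
     \<and> (\<forall>k < Lval n \<alpha> N. bij_betw \<phi> (Wk_gt n \<alpha> N k) (Wk_le n \<alpha> N (Suc k)))
     \<and> (\<forall>w\<in>W_gt n \<alpha> N. quinv' n \<alpha> l (\<phi> w) = quinv' n \<alpha> l w)
     \<and> (\<forall>w\<in>W_gt n \<alpha> N. filter (\<lambda>x. 2 \<le> x \<and> x \<le> n - 1) (\<phi> w)
                          = filter (\<lambda>x. 2 \<le> x \<and> x \<le> n - 1) w)"
proof -
  have n: "n \<ge> 3" using assms by simp
  define L where "L = Lval n \<alpha> N"
  have L0: "L \<noteq> 0" using assms(3) unfolding L_def Lval_def by simp
  have gtE: "\<exists>k<L. w \<in> Wk_gt n \<alpha> N k" if "w \<in> W_gt n \<alpha> N" for w
  proof -
    have "w \<in> (\<Union>k\<in>{0..L}. Wk_gt n \<alpha> N k)" using that unfolding W_gt_def L_def .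
    then obtain k where k0: "k \<in> {0..L}" and k2: "w \<in> Wk_gt n \<alpha> N k" by (rule UN_E)
    then have k: "k \<le> L" "w \<in> Wk_gt n \<alpha> N k" by auto
    have "k \<noteq> L" using k L0 unfolding Wk_gt_def L_def by auto
    then have kl: "k < L" using k(1) by linarith
    show ?thesis using kl k(2) by blast
  qed
  have leE: "\<exists>k<L. w \<in> Wk_le n \<alpha> N (Suc k)" if "w \<in> W_le n \<alpha> N" for w
  proof -
    have "w \<in> (\<Union>k\<in>{0..L}. Wk_le n \<alpha> N k)" using that unfolding W_le_def L_def .
    then obtain k where k0: "k \<in> {0..L}" and k2: "w \<in> Wk_le n \<alpha> N k" by (rule UN_E)
    then have k: "k \<le> L" "w \<in> Wk_le n \<alpha> N k" by auto
    have "k \<noteq> 0" using k L0 unfolding Wk_le_def L_def by (auto split: if_splits)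
    then obtain k' where "k = Suc k'" by (cases k) auto
    then show ?thesis using k by (intro exI[of _ k']) auto
  qed
  have gtI: "w \<in> W_gt n \<alpha> N" if "k < L" "w \<in> Wk_gt n \<alpha> N k" for k w
    using that unfolding W_gt_def L_def by (intro UN_I[of k]) auto
  have leI: "w \<in> W_le n \<alpha> N" if "k < L" "w \<in> Wk_le n \<alpha> N (Suc k)" for k w
    using that unfolding W_le_def L_def by (intro UN_I[of "Suc k"]) auto
  note P = phi_props[OF n, where \<alpha>=\<alpha> and N=N, folded L_def]
  note Q = psi_props[OF n, where \<alpha>=\<alpha> and N=N, folded L_def]
  have b1: "bij_betw (phi n) (W_gt n \<alpha> N) (W_le n \<alpha> N)"
  proof (rule bij_betw_byWitness[where f' = "psi n"])
    show "\<forall>a\<in>W_gt n \<alpha> N. psi n (phi n a) = a"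
    proof
      fix a assume "a \<in> W_gt n \<alpha> N"
      then obtain k where k: "k < L" "a \<in> Wk_gt n \<alpha> N k" using gtE by blast
      show "psi n (phi n a) = a" using P[OF k] by (elim conjE)
    qed
    show "\<forall>a\<in>W_le n \<alpha> N. phi n (psi n a) = a"
    proof
      fix a assume "a \<in> W_le n \<alpha> N"
      then obtain k where k: "k < L" "a \<in> Wk_le n \<alpha> N (Suc k)" using leE by blast
      show "phi n (psi n a) = a" using Q[OF k] by (elim conjE)
    qed
    show "phi n ` W_gt n \<alpha> N \<subseteq> W_le n \<alpha> N"
    proof
      fix b assume "b \<in> phi n ` W_gt n \<alpha> N"
      then obtain a where a: "a \<in> W_gt n \<alpha> N" "b = phi n a" by blast
      then obtain k where k: "k < L" "a \<in> Wk_gt n \<alpha> N k" using gtE by blast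
      have "phi n a \<in> Wk_le n \<alpha> N (Suc k)" using P[OF k] by (elim conjE)
      then show "b \<in> W_le n \<alpha> N" using leI[OF k(1)] a(2) by simp
    qed
    show "psi n ` W_le n \<alpha> N \<subseteq> W_gt n \<alpha> N"
    proof
      fix b assume "b \<in> psi n ` W_le n \<alpha> N"
      then obtain a where a: "a \<in> W_le n \<alpha> N" "b = psi n a" by blast
      then obtain k where k: "k < L" "a \<in> Wk_le n \<alpha> N (Suc k)" using leE by blast
      have "psi n a \<in> Wk_gt n \<alpha> N k" using Q[OF k] by (elim conjE)
      then show "b \<in> W_gt n \<alpha> N" using gtI[OF k(1)] a(2) by simp
    qed
  qed
  have b2: "\<forall>k < Lval n \<alpha> N. bij_betw (phi n) (Wk_gt n \<alpha> N k) (Wk_le n \<alpha> N (Suc k))"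
  proof (intro allI impI)
    fix k assume k: "k < Lval n \<alpha> N"
    show "bij_betw (phi n) (Wk_gt n \<alpha> N k) (Wk_le n \<alpha> N (Suc k))"
    proof (rule bij_betw_byWitness[where f' = "psi n"])
      have k': "k < L" using k by (simp add: L_def)
      show "\<forall>a\<in>Wk_gt n \<alpha> N k. psi n (phi n a) = a" using P[OF k'] by blast
      show "\<forall>a\<in>Wk_le n \<alpha> N (Suc k). phi n (psi n a) = a" using Q[OF k'] by blast
      show "phi n ` Wk_gt n \<alpha> N k \<subseteq> Wk_le n \<alpha> N (Suc k)" using P[OF k'] by blast
      show "psi n ` Wk_le n \<alpha> N (Suc k) \<subseteq> Wk_gt n \<alpha> N k" using Q[OF k'] by blast
    qed
  qed
  have b3: "\<forall>w\<in>W_gt n \<alpha> N. quinv' n \<alpha> l (phi n w) = quinv' n \<alpha> l w"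
  proof
    fix w assume "w \<in> W_gt n \<alpha> N"
    then obtain k where k: "k < L" "w \<in> Wk_gt n \<alpha> N k" using gtE by blast
    have ck: "count_list w n = k" using k unfolding Wk_gt_def Wk_def by (auto split: if_splits)
    show "quinv' n \<alpha> l (phi n w) = quinv' n \<alpha> l w"
    proof -
      have ch: "(Suc k choose 2) = k + (k choose 2)" by (simp add: numeral_2_eq_2)
      show ?thesis using P[OF k] ck ch unfolding quinv'_def by simp
    qed
  qed
  have b4: "\<forall>w\<in>W_gt n \<alpha> N. filter (\<lambda>x. 2 \<le> x \<and> x \<le> n - 1) (phi n w)
                          = filter (\<lambda>x. 2 \<le> x \<and> x \<le> n - 1) w"
  proof
    fix w assume "w \<in> W_gt n \<alpha> N"
    then obtain k where k: "k < L" "w \<in> Wk_gt n \<alpha> N k" using gtE by blast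
    show "filter (\<lambda>x. 2 \<le> x \<and> x \<le> n - 1) (phi n w) = filter (\<lambda>x. 2 \<le> x \<and> x \<le> n - 1) w"
      using P[OF k] by (elim conjE)
  qed
  show ?thesis using b1 b2 b3 b4 by blast
qed


end
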